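(* Let $n\ge 1$ and let $\Omega=\bigoplus_{j=1}^{n}\begin{pmatrix}0&1\\-1&0\end{pmatrix}$. Let $\sigma$ be a real symmetric $2n\times 2n$ matrix satisfying $\sigma+i\Omega\ge 0$ (i.e. $\sigma$ is an $n$-mode covariance matrix). Let $\lambda^{\uparrow}_1\le\lambda^{\uparrow}_2\le\dots\le\lambda^{\uparrow}_{2n}$ be the eigenvalues of $\sigma$ in increasing order and $\lambda^{\downarrow}_1\ge\lambda^{\downarrow}_2\ge\dots\ge\lambda^{\downarrow}_{2n}$ the same eigenvalues in decreasing order. Then $$\lambda^{\uparrow}_j\,\lambda^{\downarrow}_j\ge 1\qquad\text{for all }1\le j\le n.$$
   Context: For a system of $n$ bosonic modes with canonical operators $\hat{\mathbf R}=(\hat x_1,\hat p_1,\dots,\hat x_n,\hat p_n)^{\sf T}$ obeying $[\hat R_j,\hat R_k]=i\Omega_{jk}$, the covariance matrix (CM) of a state $\varrho$ is $\sigma_{jk}=\mathrm{Tr}(\{\hat R_j,\hat R_k\}\varrho)-2\mathrm{Tr}(\hat R_j\varrho)\mathrm{Tr}(\hat R_k\varrho)$; a real symmetric matrix is a CM of a physical state iff $\sigma+i\Omega\ge0$ (Robertson–Schrödinger uncertainty relation). *)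

theory Defs
  imports "Jordan_Normal_Form.Matrix" "Jordan_Normal_Form.Char_Poly" "Jordan_Normal_Form.Conjugate"
    "HOL-Computational_Algebra.Polynomial" "HOL-Library.Multiset"
begin

(* Symplectic form Omega = direct sum of n blocks [[0,1],[-1,0]], ordering (x1,p1,...,xn,pn),
   indices 0-based. *)
definition symp_form :: "nat \<Rightarrow> real mat" where
  "symp_form n = mat (2*n) (2*n) (\<lambda>(i,j).
      if even i \<and> j = i + 1 then 1 else if odd i \<and> i = j + 1 then -1 else 0)"

definition psd_cmat :: "complex mat \<Rightarrow> bool" where
  "psd_cmat M \<longleftrightarrow> M \<in> carrier_mat (dim_row M) (dim_row M) \<and>
     (\<forall>v \<in> carrier_vec (dim_row M).
        Im (conjugate v \<bullet> (M *\<^sub>v v)) = 0 \<and> 0 \<le> Re (conjugate v \<bullet> (M *\<^sub>v v)))"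

definition sigma_plus_iOmega :: "nat \<Rightarrow> real mat \<Rightarrow> complex mat" where
  "sigma_plus_iOmega n \<sigma> = map_mat complex_of_real \<sigma> + smult_mat \<i> (map_mat complex_of_real (symp_form n))"

definition eig_up :: "real mat \<Rightarrow> real list" where
  "eig_up A = sorted_list_of_multiset (proots (char_poly A))"

definition eig_down :: "real mat \<Rightarrow> real list" where
  "eig_down A = rev (eig_up A)"

end

theory Submission imports Defs "HOL-Computational_Algebra.Fundamental_Theorem_Algebra" "HOL-Combinatorics.Permutations"
begin

lemma hom_system:
  fixes f :: "'r \<Rightarrow> 'i \<Rightarrow> real"
  assumes "finite R" "finite I" "card R < card I"
  shows "\<exists>c. (\<exists>i\<in>I. c i \<noteq> 0) \<and> (\<forall>r\<in>R. (\<Sum>i\<in>I. f r i * c i) = 0)"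
  using assms
proof (induction R arbitrary: I f rule: finite_induct)
  case empty
  then obtain i where "i \<in> I" by fastforce
  then show ?case by (intro exI[of _ "\<lambda>_. 1"]) auto
next
  case (insert q R I f)
  show ?case
  proof (cases "\<forall>i\<in>I. f q i = 0")
    case True
    from insert.IH[of I f] insert.prems insert.hyps obtain c where
      c: "\<exists>i\<in>I. c i \<noteq> 0" "\<forall>r\<in>R. (\<Sum>i\<in>I. f r i * c i) = 0" by auto
    show ?thesis using c True by (intro exI[of _ c]) auto
  next
    case False
    then obtain p where p: "p \<in> I" "f q p \<noteq> 0" by auto
    define I' where "I' = I - {p}"
    define g where "g r i = f r i - f r p * f q i / f q p" for r i
    have cI': "card R < card I'" using insert.prems insert.hyps p unfolding I'_def
      by (simp add: card_Diff_singleton)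
    from insert.IH[of I' g] cI' insert.prems obtain c where
      c: "\<exists>i\<in>I'. c i \<noteq> 0" "\<forall>r\<in>R. (\<Sum>i\<in>I'. g r i * c i) = 0" unfolding I'_def by auto
    define cp where "cp = - (\<Sum>i\<in>I'. f q i * c i) / f q p"
    define c' where "c' = c(p := cp)"
    have split: "(\<Sum>i\<in>I. h i) = h p + (\<Sum>i\<in>I'. h i)" for h :: "'i \<Rightarrow> real"
      using p insert.prems unfolding I'_def by (simp add: sum.remove)
    have c'I': "(\<Sum>i\<in>I'. h i * c' i) = (\<Sum>i\<in>I'. h i * c i)" for h :: "'i \<Rightarrow> real"
      unfolding c'_def I'_def by (intro sum.cong) auto
    show ?thesis
    proof (intro exI[of _ c'] conjI ballI)
      show "\<exists>i\<in>I. c' i \<noteq> 0" using c(1) unfolding c'_def I'_def by auto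
      fix r assume r: "r \<in> insert q R"
      show "(\<Sum>i\<in>I. f r i * c' i) = 0"
      proof (cases "r = q")
        case True
        then show ?thesis using p(2) unfolding split c'I' by (simp add: c'_def cp_def)
      next
        case False
        with r have rR: "r \<in> R" by auto
        have "(\<Sum>i\<in>I'. g r i * c i) = (\<Sum>i\<in>I'. f r i * c i) - f r p / f q p * (\<Sum>i\<in>I'. f q i * c i)"
          unfolding g_def by (simp add: algebra_simps sum_subtractf sum_distrib_left)
        then show ?thesis using c(2) rR p(2) unfolding split c'I'
          by (simp add: c'_def cp_def field_simps)
      qed
    qed
  qed
qed

lemma self_sprod_pos:
  fixes u :: "real vec"
  assumes "u \<in> carrier_vec n" "u \<noteq> 0\<^sub>v n"
  shows "u \<bullet> u > 0"
proof -
  have ge: "u \<bullet> u \<ge> 0" unfolding scalar_prod_def by (intro sum_nonneg) auto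
  have "u \<bullet> u \<noteq> 0"
  proof
    assume "u \<bullet> u = 0"
    hence "\<forall>i\<in>{0..<n}. u $ i * u $ i = 0" using assms(1) unfolding scalar_prod_def
      by (subst (asm) sum_nonneg_eq_0_iff) auto
    hence "u = 0\<^sub>v n" using assms(1) by (intro eq_vecI) auto
    with assms(2) show False by simp
  qed
  with ge show ?thesis by simp
qed

lemma sym_real_eigvec:
  fixes A :: "real mat"
  assumes A: "A \<in> carrier_mat n n" and sym: "transpose_mat A = A" and n: "n > 0"
  shows "\<exists>e v. v \<in> carrier_vec n \<and> v \<bullet> v = 1 \<and> A *\<^sub>v v = e \<cdot>\<^sub>v v"
proof -
  define Ac where "Ac = map_mat complex_of_real A"
  have Ac: "Ac \<in> carrier_mat n n" using A unfolding Ac_def by auto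
  have "degree (char_poly Ac) = n" using degree_monic_char_poly[OF Ac] by auto
  hence "\<not> constant (poly (char_poly Ac))" using n by (simp add: constant_degree)
  then obtain z where "poly (char_poly Ac) z = 0" using fundamental_theorem_of_algebra by blast
  hence "eigenvalue Ac z" using eigenvalue_root_char_poly[OF Ac] by simp
  then obtain w where w: "w \<in> carrier_vec n" "w \<noteq> 0\<^sub>v n" "Ac *\<^sub>v w = z \<cdot>\<^sub>v w"
    unfolding eigenvalue_def eigenvector_def using Ac by auto
  define x where "x = vec n (\<lambda>i. Re (w $ i))"
  define y where "y = vec n (\<lambda>i. Im (w $ i))"
  define a where "a = Re z"
  define b where "b = Im z"
  have x: "x \<in> carrier_vec n" and y: "y \<in> carrier_vec n" unfolding x_def y_def by auto
  have comp: "(\<Sum>j<n. complex_of_real (A $$ (i,j)) * w $ j) = z * w $ i" if i: "i < n" for i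
  proof -
    have "(Ac *\<^sub>v w) $ i = z * w $ i" using w(3) i w(1) by simp
    moreover have "(Ac *\<^sub>v w) $ i = (\<Sum>j<n. complex_of_real (A $$ (i,j)) * w $ j)"
      using i A w(1) Ac unfolding Ac_def by (simp add: scalar_prod_def lessThan_atLeast0)
    ultimately show ?thesis by simp
  qed
  have Ax: "A *\<^sub>v x = a \<cdot>\<^sub>v x - b \<cdot>\<^sub>v y"
  proof (rule eq_vecI)
    fix i assume "i < dim_vec (a \<cdot>\<^sub>v x - b \<cdot>\<^sub>v y)"
    hence i: "i < n" using x y by simp
    have "Re (\<Sum>j<n. complex_of_real (A $$ (i,j)) * w $ j) = (\<Sum>j<n. A $$ (i,j) * Re (w $ j))"
      by (simp add: Re_sum)
    with comp[OF i] have "(\<Sum>j<n. A $$ (i,j) * Re (w $ j)) = a * Re (w $ i) - b * Im (w $ i)"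
      unfolding a_def b_def by simp
    then show "(A *\<^sub>v x) $ i = (a \<cdot>\<^sub>v x - b \<cdot>\<^sub>v y) $ i"
      using i A x y unfolding x_def y_def by (simp add: scalar_prod_def lessThan_atLeast0)
  qed (insert A x y, auto)
  have Ay: "A *\<^sub>v y = b \<cdot>\<^sub>v x + a \<cdot>\<^sub>v y"
  proof (rule eq_vecI)
    fix i assume "i < dim_vec (b \<cdot>\<^sub>v x + a \<cdot>\<^sub>v y)"
    hence i: "i < n" using x y by simp
    have "Im (\<Sum>j<n. complex_of_real (A $$ (i,j)) * w $ j) = (\<Sum>j<n. A $$ (i,j) * Im (w $ j))"
      by (simp add: Im_sum)
    with comp[OF i] have "(\<Sum>j<n. A $$ (i,j) * Im (w $ j)) = b * Re (w $ i) + a * Im (w $ i)"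
      unfolding a_def b_def by simp
    then show "(A *\<^sub>v y) $ i = (b \<cdot>\<^sub>v x + a \<cdot>\<^sub>v y) $ i"
      using i A x y unfolding x_def y_def by (simp add: scalar_prod_def lessThan_atLeast0)
  qed (insert A x y, auto)
  have symm: "x \<bullet> (A *\<^sub>v y) = y \<bullet> (A *\<^sub>v x)"
  proof -
    have "x \<bullet> (A *\<^sub>v y) = (transpose_mat A *\<^sub>v x) \<bullet> y"
      using transpose_vec_mult_scalar[OF A y x] by simp
    also have "\<dots> = y \<bullet> (A *\<^sub>v x)" using sym A x y by (simp add: comm_scalar_prod[of _ n])
    finally show ?thesis .
  qed
  have "x \<bullet> (A *\<^sub>v y) = b * (x \<bullet> x) + a * (x \<bullet> y)" unfolding Ay using x y
    by (simp add: scalar_prod_add_distrib[of _ n])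
  moreover have "y \<bullet> (A *\<^sub>v x) = a * (y \<bullet> x) - b * (y \<bullet> y)" unfolding Ax using x y
    by (simp add: scalar_prod_minus_distrib[of _ n])
  moreover have "x \<bullet> y = y \<bullet> x" using x y by (simp add: comm_scalar_prod[of _ n])
  ultimately have b0: "b * (x \<bullet> x + y \<bullet> y) = 0" using symm by (simp add: algebra_simps)
  have "x \<noteq> 0\<^sub>v n \<or> y \<noteq> 0\<^sub>v n"
  proof (rule ccontr)
    assume "\<not> ?thesis"
    hence "x = 0\<^sub>v n" "y = 0\<^sub>v n" by auto
    have "w = 0\<^sub>v n"
    proof (rule eq_vecI)
      fix i assume "i < dim_vec (0\<^sub>v n :: complex vec)"
      hence i: "i < n" by simp
      have "x $ i = 0" "y $ i = 0" using \<open>x = 0\<^sub>v n\<close> \<open>y = 0\<^sub>v n\<close> i by auto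
      then show "w $ i = 0\<^sub>v n $ i" using i unfolding x_def y_def by (simp add: complex_eq_iff)
    qed (insert w(1), auto)
    with w(2) show False by simp
  qed
  then obtain u where u: "u \<in> carrier_vec n" "u \<noteq> 0\<^sub>v n" "A *\<^sub>v u = a \<cdot>\<^sub>v u"
  proof
    assume "x \<noteq> 0\<^sub>v n"
    hence "x \<bullet> x > 0" using self_sprod_pos x by blast
    moreover have "y \<bullet> y \<ge> 0" unfolding scalar_prod_def by (intro sum_nonneg) auto
    ultimately have "b = 0" using b0 by simp
    with Ax x y have "A *\<^sub>v x = a \<cdot>\<^sub>v x" by auto
    then show thesis using that x \<open>x \<noteq> 0\<^sub>v n\<close> by blast
  next
    assume "y \<noteq> 0\<^sub>v n"
    hence "y \<bullet> y > 0" using self_sprod_pos y by blast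
    moreover have "x \<bullet> x \<ge> 0" unfolding scalar_prod_def by (intro sum_nonneg) auto
    ultimately have "b = 0" using b0 by simp
    with Ay x y have "A *\<^sub>v y = a \<cdot>\<^sub>v y" by auto
    then show thesis using that y \<open>y \<noteq> 0\<^sub>v n\<close> by blast
  qed
  have pos: "u \<bullet> u > 0" using self_sprod_pos u by blast
  define v where "v = (1 / sqrt (u \<bullet> u)) \<cdot>\<^sub>v u"
  have "v \<bullet> v = (1 / sqrt (u \<bullet> u)) * (1 / sqrt (u \<bullet> u)) * (u \<bullet> u)"
    unfolding v_def using u by simp
  also have "\<dots> = 1" using pos by (simp add: field_simps)
  finally have "v \<bullet> v = 1" .
  moreover have "A *\<^sub>v v = a \<cdot>\<^sub>v v" unfolding v_def using u A
    by (simp add: mult_mat_vec smult_smult_assoc mult.commute)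
  ultimately show ?thesis using u unfolding v_def by auto
qed

lemma householder:
  fixes v :: "real vec"
  assumes v: "v \<in> carrier_vec n" and v1: "v \<bullet> v = 1" and n: "n > 0"
  shows "\<exists>H \<in> carrier_mat n n. transpose_mat H = H \<and> H * H = 1\<^sub>m n \<and> H *\<^sub>v v = unit_vec n 0"
proof (cases "v = unit_vec n 0")
  case True
  then show ?thesis by (intro bexI[of _ "1\<^sub>m n"]) auto
next
  case False
  define u where "u = v - unit_vec n 0"
  have u: "u \<in> carrier_vec n" unfolding u_def using v by simp
  have u0: "u \<noteq> 0\<^sub>v n"
  proof
    assume "u = 0\<^sub>v n"
    have "v = unit_vec n 0"
    proof (rule eq_vecI)
      fix i assume "i < dim_vec (unit_vec n 0 :: real vec)"
      hence i: "i < n" by simp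
      have "u $ i = 0" using \<open>u = 0\<^sub>v n\<close> i by simp
      then show "v $ i = unit_vec n 0 $ i" using i v unfolding u_def by simp
    qed (insert v, auto)
    with False show False by simp
  qed
  have uu: "u \<bullet> u > 0" using self_sprod_pos[OF u u0] .
  define c where "c = 2 / (u \<bullet> u)"
  have cuu: "c * (u \<bullet> u) = 2" unfolding c_def using uu by simp
  define d :: "nat \<Rightarrow> nat \<Rightarrow> real" where "d = (\<lambda>i j. if i = j then 1 else 0)"
  define H where "H = mat n n (\<lambda>(i,j). d i j - c * u $ i * u $ j)"
  have H: "H \<in> carrier_mat n n" unfolding H_def by simp
  have dl: "(\<Sum>k\<in>{0..<n}. d i k * f k) = f i" if "i < n" for i f
  proof -
    have "(\<Sum>k\<in>{0..<n}. d i k * f k) = (\<Sum>k\<in>{0..<n}. if k = i then f i else 0)"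
      unfolding d_def by (intro sum.cong) auto
    then show ?thesis using that by simp
  qed
  have dr: "(\<Sum>k\<in>{0..<n}. f k * d k j) = f j" if "j < n" for j f
  proof -
    have "(\<Sum>k\<in>{0..<n}. f k * d k j) = (\<Sum>k\<in>{0..<n}. if k = j then f j else 0)"
      unfolding d_def by (intro sum.cong) auto
    then show ?thesis using that by simp
  qed
  have tH: "transpose_mat H = H" unfolding H_def d_def by (rule eq_matI) auto
  have sum_uu: "(\<Sum>k\<in>{0..<n}. u $ k * u $ k) = u \<bullet> u" using u unfolding scalar_prod_def by simp
  have HH: "H * H = 1\<^sub>m n"
  proof (rule eq_matI)
    fix i j assume ij: "i < dim_row (1\<^sub>m n :: real mat)" "j < dim_col (1\<^sub>m n :: real mat)"
    hence i: "i < n" and j: "j < n" by auto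
    have "(H * H) $$ (i,j) = (\<Sum>k\<in>{0..<n}. (d i k - c * u $ i * u $ k) * (d k j - c * u $ k * u $ j))"
      using i j unfolding H_def by (simp add: scalar_prod_def)
    also have "\<dots> = (\<Sum>k\<in>{0..<n}. d i k * d k j) - (\<Sum>k\<in>{0..<n}. d i k * (c * u $ k * u $ j))
        - (\<Sum>k\<in>{0..<n}. c * u $ i * u $ k * d k j) + c * c * u $ i * u $ j * (\<Sum>k\<in>{0..<n}. u $ k * u $ k)"
      by (simp add: algebra_simps sum.distrib sum_subtractf sum_distrib_left)
    also have "(\<Sum>k\<in>{0..<n}. d i k * d k j) = d i j" using dl[OF i] .
    also have "(\<Sum>k\<in>{0..<n}. d i k * (c * u $ k * u $ j)) = c * u $ i * u $ j" using dl[OF i] .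
    also have "(\<Sum>k\<in>{0..<n}. c * u $ i * u $ k * d k j) = c * u $ i * u $ j" using dr[OF j] .
    also have "c * c * u $ i * u $ j * (\<Sum>k\<in>{0..<n}. u $ k * u $ k) = (c * (u \<bullet> u)) * c * u $ i * u $ j"
      unfolding sum_uu by simp
    finally show "(H * H) $$ (i,j) = 1\<^sub>m n $$ (i,j)" using i j cuu unfolding d_def by simp
  qed (insert H, auto)
  have vv: "(\<Sum>i\<in>{0..<n}. v $ i * v $ i) = 1" using v1 v unfolding scalar_prod_def by simp
  have uu2: "u \<bullet> u = 2 - 2 * v $ 0"
  proof -
    have "u \<bullet> u = (\<Sum>i\<in>{0..<n}. (v $ i - d i 0) * (v $ i - d i 0))"
      unfolding u_def scalar_prod_def using v n by (intro sum.cong) (auto simp: d_def)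
    also have "\<dots> = (\<Sum>i\<in>{0..<n}. v $ i * v $ i) - 2 * (\<Sum>i\<in>{0..<n}. v $ i * d i 0)
         + (\<Sum>i\<in>{0..<n}. d i 0 * d i 0)"
      by (simp add: algebra_simps sum_subtractf sum.distrib sum_distrib_left)
    also have "\<dots> = 2 - 2 * v $ 0" using dr[OF n, of "\<lambda>i. v $ i"] dr[OF n, of "\<lambda>i. d i 0"] vv
      by (simp add: d_def)
    finally show ?thesis .
  qed
  have uv: "u \<bullet> v = 1 - v $ 0"
  proof -
    have "u \<bullet> v = (\<Sum>i\<in>{0..<n}. (v $ i - d i 0) * v $ i)"
      unfolding u_def scalar_prod_def using v n by (intro sum.cong) (auto simp: d_def)
    also have "\<dots> = (\<Sum>i\<in>{0..<n}. v $ i * v $ i) - (\<Sum>i\<in>{0..<n}. v $ i * d i 0)"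
      by (simp add: algebra_simps sum_subtractf)
    also have "\<dots> = 1 - v $ 0" using dr[OF n, of "\<lambda>i. v $ i"] vv by simp
    finally show ?thesis .
  qed
  have v0: "v $ 0 \<noteq> 1" using uu uu2 by auto
  have cuv: "c * (u \<bullet> v) = 1" unfolding c_def uu2 uv using v0 by (simp add: field_simps)
  have "H *\<^sub>v v = unit_vec n 0"
  proof (rule eq_vecI)
    fix i assume "i < dim_vec (unit_vec n 0 :: real vec)"
    hence i: "i < n" by simp
    have "(H *\<^sub>v v) $ i = (\<Sum>k\<in>{0..<n}. (d i k - c * u $ i * u $ k) * v $ k)"
      using i v unfolding H_def by (simp add: scalar_prod_def)
    also have "\<dots> = (\<Sum>k\<in>{0..<n}. d i k * v $ k) - c * u $ i * (\<Sum>k\<in>{0..<n}. u $ k * v $ k)"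
      by (simp add: algebra_simps sum_subtractf sum_distrib_left)
    also have "(\<Sum>k\<in>{0..<n}. d i k * v $ k) = v $ i" using dl[OF i] .
    also have "(\<Sum>k\<in>{0..<n}. u $ k * v $ k) = u \<bullet> v" using v unfolding scalar_prod_def by simp
    finally have "(H *\<^sub>v v) $ i = v $ i - (c * (u \<bullet> v)) * u $ i" by simp
    also have "\<dots> = unit_vec n 0 $ i" using cuv i v unfolding u_def by simp
    finally show "(H *\<^sub>v v) $ i = unit_vec n 0 $ i" .
  qed (insert H, auto)
  with H tH HH show ?thesis by blast
qed

lemma mult_unit_vec_index:
  fixes M :: "real mat"
  assumes "M \<in> carrier_mat n n" "i < n" "j < n"
  shows "(M *\<^sub>v unit_vec n j) $ i = M $$ (i,j)"
proof -
  have "(M *\<^sub>v unit_vec n j) $ i = (\<Sum>k\<in>{0..<n}. M $$ (i,k) * unit_vec n j $ k)"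
    using assms by (simp add: scalar_prod_def)
  also have "\<dots> = (\<Sum>k\<in>{0..<n}. if k = j then M $$ (i,j) else 0)"
    using assms by (intro sum.cong) (auto simp: unit_vec_def)
  also have "\<dots> = M $$ (i,j)" using assms by simp
  finally show ?thesis .
qed

lemma spectral:
  fixes A :: "real mat"
  assumes "A \<in> carrier_mat n n" "transpose_mat A = A"
  shows "\<exists>P \<in> carrier_mat n n. transpose_mat P * P = 1\<^sub>m n \<and> diagonal_mat (transpose_mat P * A * P)"
  using assms
proof (induction n arbitrary: A)
  case 0
  then show ?case by (intro bexI[of _ "1\<^sub>m 0"]) (auto simp: diagonal_mat_def)
next
  case (Suc k A)
  define n where "n = Suc k"
  have A: "A \<in> carrier_mat n n" and symA: "transpose_mat A = A" using Suc.prems unfolding n_def by auto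
  have n: "n > 0" unfolding n_def by simp
  obtain e v where v: "v \<in> carrier_vec n" "v \<bullet> v = 1" "A *\<^sub>v v = e \<cdot>\<^sub>v v"
    using sym_real_eigvec[OF A symA n] by blast
  obtain H where H: "H \<in> carrier_mat n n" "transpose_mat H = H" "H * H = 1\<^sub>m n" "H *\<^sub>v v = unit_vec n 0"
    using householder[OF v(1) v(2) n] by blast
  define A' where "A' = H * A * H"
  have A': "A' \<in> carrier_mat n n" unfolding A'_def using H A by simp
  have symA': "transpose_mat A' = A'"
  proof -
    have "transpose_mat (H * A * H) = transpose_mat H * transpose_mat (H * A)"
      using transpose_mult[of "H * A" n n H n] H A by simp
    also have "transpose_mat (H * A) = transpose_mat A * transpose_mat H"
      using transpose_mult[of H n n A n] H A by simp
    finally show ?thesis unfolding A'_def using H A symA by (simp add: assoc_mult_mat[of _ n n _ n _ n])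
  qed
  have He: "H *\<^sub>v unit_vec n 0 = v"
  proof -
    have "H *\<^sub>v unit_vec n 0 = H *\<^sub>v (H *\<^sub>v v)" using H by simp
    also have "\<dots> = (H * H) *\<^sub>v v" by (rule assoc_mult_mat_vec[symmetric, OF H(1) H(1) v(1)])
    also have "\<dots> = v" unfolding H(3) using v by simp
    finally show ?thesis .
  qed
  have A'e: "A' *\<^sub>v unit_vec n 0 = e \<cdot>\<^sub>v unit_vec n 0"
  proof -
    have "A' *\<^sub>v unit_vec n 0 = (H * A) *\<^sub>v (H *\<^sub>v unit_vec n 0)"
      unfolding A'_def by (rule assoc_mult_mat_vec[OF _ H(1)], insert H A, auto)
    also have "\<dots> = H *\<^sub>v (A *\<^sub>v (H *\<^sub>v unit_vec n 0))"
      by (rule assoc_mult_mat_vec[OF H(1) A], insert H, auto)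
    also have "\<dots> = H *\<^sub>v (e \<cdot>\<^sub>v v)" unfolding He v(3) ..
    also have "\<dots> = e \<cdot>\<^sub>v (H *\<^sub>v v)" using H v by (simp add: mult_mat_vec)
    finally show ?thesis using H by simp
  qed
  have col0: "A' $$ (i,0) = (if i = 0 then e else 0)" if "i < n" for i
  proof -
    have "A' $$ (i,0) = (A' *\<^sub>v unit_vec n 0) $ i" using mult_unit_vec_index[OF A' that n] by simp
    then show ?thesis unfolding A'e using that n by simp
  qed
  have row0: "A' $$ (0,j) = (if j = 0 then e else 0)" if "j < n" for j
  proof -
    have "A' $$ (0,j) = transpose_mat A' $$ (j,0)" using A' that n by simp
    then show ?thesis using symA' col0[OF that] by simp
  qed
  define A3 where "A3 = mat k k (\<lambda>(i,j). A' $$ (Suc i, Suc j))"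
  have A3: "A3 \<in> carrier_mat k k" unfolding A3_def by simp
  have symA3: "transpose_mat A3 = A3"
  proof (rule eq_matI)
    fix i j assume "i < dim_row A3" "j < dim_col A3"
    hence i: "i < k" and j: "j < k" using A3 by auto
    have "A' $$ (Suc j, Suc i) = transpose_mat A' $$ (Suc i, Suc j)" using A' i j unfolding n_def by simp
    then show "transpose_mat A3 $$ (i,j) = A3 $$ (i,j)" using i j symA' unfolding A3_def by simp
  qed (insert A3, auto)
  obtain P3 where P3: "P3 \<in> carrier_mat k k" "transpose_mat P3 * P3 = 1\<^sub>m k"
      "diagonal_mat (transpose_mat P3 * A3 * P3)"
    using Suc.IH[OF A3 symA3] by blast
  define E where "E = mat 1 1 (\<lambda>_. e)"
  have E: "E \<in> carrier_mat 1 1" unfolding E_def by simp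
  define R where "R = four_block_mat (1\<^sub>m 1) (0\<^sub>m 1 k) (0\<^sub>m k 1) P3"
  have R: "R \<in> carrier_mat n n" unfolding R_def n_def using P3 by auto
  have A'b: "A' = four_block_mat E (0\<^sub>m 1 k) (0\<^sub>m k 1) A3"
  proof (rule eq_matI)
    fix i j assume "i < dim_row (four_block_mat E (0\<^sub>m 1 k) (0\<^sub>m k 1) A3)"
      "j < dim_col (four_block_mat E (0\<^sub>m 1 k) (0\<^sub>m k 1) A3)"
    hence i: "i < Suc k" and j: "j < Suc k" using E A3 by auto
    show "A' $$ (i,j) = four_block_mat E (0\<^sub>m 1 k) (0\<^sub>m k 1) A3 $$ (i,j)"
    proof (cases "i = 0 \<or> j = 0")
      case True
      then show ?thesis using col0 row0 i j E A3 unfolding n_def E_def by auto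
    next
      case False
      then obtain i' j' where "i = Suc i'" "j = Suc j'" by (cases i; cases j) auto
      then show ?thesis using i j E A3 unfolding A3_def by auto
    qed
  qed (insert A' E A3, auto simp: n_def)
  have RtR: "transpose_mat R * R = 1\<^sub>m n"
  proof -
    have "transpose_mat R = four_block_mat (1\<^sub>m 1) (0\<^sub>m 1 k) (0\<^sub>m k 1) (transpose_mat P3)"
      unfolding R_def using P3 by (simp add: transpose_four_block_mat[of _ 1 1 _ k _ k])
    hence "transpose_mat R * R = four_block_mat (1\<^sub>m 1) (0\<^sub>m 1 k) (0\<^sub>m k 1) (transpose_mat P3 * P3)"
      unfolding R_def using P3 by (simp add: mult_four_block_mat[of _ 1 1 _ k _ k _ _ 1 _ k])
    then show ?thesis using P3 unfolding n_def by simp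
  qed
  define P where "P = H * R"
  have P: "P \<in> carrier_mat n n" unfolding P_def using H R by simp
  have tP: "transpose_mat P = transpose_mat R * H" unfolding P_def using H R
    by (simp add: transpose_mult[of _ n n])
  have "transpose_mat P * P = transpose_mat R * H * (H * R)" unfolding tP unfolding P_def ..
  also have "\<dots> = transpose_mat R * ((H * H) * R)" using H(1) R
    by (simp add: assoc_mult_mat[of _ n n _ n _ n])
  also have "\<dots> = transpose_mat R * R" unfolding H(3) using R by simp
  finally have PtP: "transpose_mat P * P = 1\<^sub>m n" using RtR by simp
  have "transpose_mat P * A * P = transpose_mat R * H * A * (H * R)" unfolding tP unfolding P_def ..
  also have "\<dots> = transpose_mat R * A' * R" unfolding A'_def using H(1) R A
    by (simp add: assoc_mult_mat[of _ n n _ n _ n])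
  also have "\<dots> = four_block_mat E (0\<^sub>m 1 k) (0\<^sub>m k 1) (transpose_mat P3 * A3 * P3)"
  proof -
    have "transpose_mat R = four_block_mat (1\<^sub>m 1) (0\<^sub>m 1 k) (0\<^sub>m k 1) (transpose_mat P3)"
      unfolding R_def using P3 by (simp add: transpose_four_block_mat[of _ 1 1 _ k _ k])
    hence "transpose_mat R * A' = four_block_mat E (0\<^sub>m 1 k) (0\<^sub>m k 1) (transpose_mat P3 * A3)"
      unfolding A'b using P3 E A3 by (simp add: mult_four_block_mat[of _ 1 1 _ k _ k _ _ 1 _ k])
    then show ?thesis
      unfolding R_def using P3 E A3 by (simp add: mult_four_block_mat[of _ 1 1 _ k _ k _ _ 1 _ k])
  qed
  finally have D: "transpose_mat P * A * P = four_block_mat E (0\<^sub>m 1 k) (0\<^sub>m k 1) (transpose_mat P3 * A3 * P3)" .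
  have "diagonal_mat (transpose_mat P * A * P)"
    unfolding D diagonal_mat_def
  proof (intro allI impI)
    fix i j assume i: "i < dim_row (four_block_mat E (0\<^sub>m 1 k) (0\<^sub>m k 1) (transpose_mat P3 * A3 * P3))"
      and j: "j < dim_col (four_block_mat E (0\<^sub>m 1 k) (0\<^sub>m k 1) (transpose_mat P3 * A3 * P3))"
      and ij: "i \<noteq> j"
    have D3: "transpose_mat P3 * A3 * P3 \<in> carrier_mat k k" using P3 A3 by simp
    show "four_block_mat E (0\<^sub>m 1 k) (0\<^sub>m k 1) (transpose_mat P3 * A3 * P3) $$ (i, j) = 0"
    proof (cases "i = 0 \<or> j = 0")
      case True
      then show ?thesis using i j ij E D3 by auto
    next
      case False
      then obtain i' j' where ij': "i = Suc i'" "j = Suc j'" by (cases i; cases j) auto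
      have "(transpose_mat P3 * A3 * P3) $$ (i',j') = 0"
        using P3(3) ij' i j ij D3 E unfolding diagonal_mat_def by auto
      then show ?thesis using i j E D3 ij' by auto
    qed
  qed
  with P PtP show ?case unfolding n_def by blast
qed

lemma proots_lin_prod: "proots (\<Prod>a\<leftarrow>d. [:- a, 1:]) = mset (d :: real list)"
proof -
  have "(\<Prod>a\<leftarrow>d. [:- a, 1:]) = (\<Prod>p\<leftarrow>map (\<lambda>a. [:- a, 1:]) d. p)"
    by (simp add: o_def)
  also have "proots \<dots> = sum_list (map proots (map (\<lambda>a. [:- a, 1:]) d))"
    by (rule proots_prod_list) auto
  also have "\<dots> = (\<Sum>a\<leftarrow>d. {#a#})" by (simp add: o_def proots_linear_factor)
  also have "\<dots> = mset d" by (simp add: sum_list_singleton_mset)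
  finally show ?thesis .
qed

lemma eig_up_diag:
  fixes \<sigma> P :: "real mat"
  assumes S: "\<sigma> \<in> carrier_mat m m" and P: "P \<in> carrier_mat m m"
    and PtP: "transpose_mat P * P = 1\<^sub>m m" and diag: "diagonal_mat (transpose_mat P * \<sigma> * P)"
  shows "eig_up \<sigma> = sort (diag_mat (transpose_mat P * \<sigma> * P))"
proof -
  define D where "D = transpose_mat P * \<sigma> * P"
  have D: "D \<in> carrier_mat m m" unfolding D_def using S P by simp
  have tP: "transpose_mat P \<in> carrier_mat m m" using P by simp
  have PPt: "P * transpose_mat P = 1\<^sub>m m" using mat_mult_left_right_inverse[OF tP P PtP] .
  have "\<sigma> = P * D * transpose_mat P"
  proof -
    have "P * D * transpose_mat P = (P * transpose_mat P) * \<sigma> * (P * transpose_mat P)"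
      unfolding D_def using S P by (simp add: assoc_mult_mat[of _ m m _ m _ m])
    also have "\<dots> = \<sigma>" unfolding PPt using S by simp
    finally show ?thesis by simp
  qed
  hence "similar_mat \<sigma> D" unfolding similar_mat_def
    using similar_mat_witI[OF PPt PtP _ S D P tP] by blast
  hence "char_poly \<sigma> = char_poly D" by (rule char_poly_similar)
  also have "upper_triangular D" using diag D unfolding D_def[symmetric] diagonal_mat_def upper_triangular_def by auto
  hence "char_poly D = (\<Prod>a\<leftarrow>diag_mat D. [:- a, 1:])" using char_poly_upper_triangular[OF D] by simp
  finally show ?thesis unfolding eig_up_def D_def[symmetric]
    by (simp add: proots_lin_prod sorted_list_of_multiset_mset)
qed

lemma psd_real_form:
  fixes \<sigma> :: "real mat" and x y :: "real vec"
  assumes S: "\<sigma> \<in> carrier_mat (2*n) (2*n)" and psd: "psd_cmat (sigma_plus_iOmega n \<sigma>)"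
    and x: "x \<in> carrier_vec (2*n)" and y: "y \<in> carrier_vec (2*n)"
  shows "x \<bullet> (\<sigma> *\<^sub>v x) + y \<bullet> (\<sigma> *\<^sub>v y) - x \<bullet> (symp_form n *\<^sub>v y) + y \<bullet> (symp_form n *\<^sub>v x) \<ge> 0"
proof -
  define m where "m = 2 * n"
  define Om where "Om = symp_form n"
  have Om: "Om \<in> carrier_mat m m" unfolding Om_def m_def symp_form_def by simp
  have Sm: "\<sigma> \<in> carrier_mat m m" using S unfolding m_def .
  define M where "M = sigma_plus_iOmega n \<sigma>"
  have M: "M \<in> carrier_mat m m" unfolding M_def sigma_plus_iOmega_def using Sm Om
    unfolding Om_def m_def by auto
  have Mij: "M $$ (i,j) = Complex (\<sigma> $$ (i,j)) (Om $$ (i,j))" if "i < m" "j < m" for i j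
    using that Sm Om unfolding M_def sigma_plus_iOmega_def Om_def m_def
    by (simp add: complex_eq_iff)
  define v where "v = vec m (\<lambda>i. Complex (x $ i) (y $ i))"
  have v: "v \<in> carrier_vec m" unfolding v_def by simp
  have dM: "dim_row M = m" using M by simp
  from psd v have "0 \<le> Re (conjugate v \<bullet> (M *\<^sub>v v))" unfolding psd_cmat_def M_def[symmetric] dM
    by auto
  also have "Re (conjugate v \<bullet> (M *\<^sub>v v)) = (\<Sum>i\<in>{0..<m}. \<Sum>j\<in>{0..<m}.
      \<sigma> $$ (i,j) * (x $ i * x $ j + y $ i * y $ j) - Om $$ (i,j) * (x $ i * y $ j - y $ i * x $ j))"
  proof -
    have "conjugate v \<bullet> (M *\<^sub>v v) = (\<Sum>i\<in>{0..<m}. cnj (v $ i) * (\<Sum>j\<in>{0..<m}. M $$ (i,j) * v $ j))"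
      using v M by (simp add: scalar_prod_def)
    also have "\<dots> = (\<Sum>i\<in>{0..<m}. \<Sum>j\<in>{0..<m}. cnj (v $ i) * M $$ (i,j) * v $ j)"
      by (simp add: sum_distrib_left mult.assoc)
    finally have "Re (conjugate v \<bullet> (M *\<^sub>v v)) = (\<Sum>i\<in>{0..<m}. \<Sum>j\<in>{0..<m}. Re (cnj (v $ i) * M $$ (i,j) * v $ j))"
      by (simp add: Re_sum)
    also have "\<dots> = (\<Sum>i\<in>{0..<m}. \<Sum>j\<in>{0..<m}.
      \<sigma> $$ (i,j) * (x $ i * x $ j + y $ i * y $ j) - Om $$ (i,j) * (x $ i * y $ j - y $ i * x $ j))"
      by (intro sum.cong refl) (simp add: Mij v_def algebra_simps)
    finally show ?thesis .
  qed
  also have "\<dots> = x \<bullet> (\<sigma> *\<^sub>v x) + y \<bullet> (\<sigma> *\<^sub>v y) - x \<bullet> (Om *\<^sub>v y) + y \<bullet> (Om *\<^sub>v x)"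
    using x y Sm Om unfolding m_def[symmetric]
    by (simp add: scalar_prod_def sum_distrib_left sum.distrib sum_subtractf algebra_simps)
  finally show ?thesis unfolding Om_def .
qed

definition pt :: "nat \<Rightarrow> nat" where "pt i = (if even i then i + 1 else i - 1)"
definition sg :: "nat \<Rightarrow> real" where "sg i = (if even i then 1 else -1)"

lemma pt_lt: "i < 2 * n \<Longrightarrow> pt i < 2 * n"
  unfolding pt_def by (auto elim!: evenE)

lemma pt_pt: "pt (pt i) = i"
  unfolding pt_def by (auto elim!: oddE)

lemma sg_pt: "sg (pt i) = - sg i"
  unfolding sg_def pt_def by (auto elim!: oddE)

lemma omega_entry:
  assumes "i < 2 * n" "k < 2 * n"
  shows "symp_form n $$ (i,k) = (if k = pt i then sg i else 0)"
  using assms unfolding symp_form_def pt_def sg_def by (auto elim!: oddE; presburger)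

lemma omega_carrier: "symp_form n \<in> carrier_mat (2*n) (2*n)"
  unfolding symp_form_def by simp

lemma omega_mult:
  assumes w: "w \<in> carrier_vec (2*n)" and i: "i < 2 * n"
  shows "(symp_form n *\<^sub>v w) $ i = sg i * w $ pt i"
proof -
  have "(symp_form n *\<^sub>v w) $ i = (\<Sum>k\<in>{0..<2*n}. symp_form n $$ (i,k) * w $ k)"
    using w i omega_carrier[of n] by (simp add: scalar_prod_def)
  also have "\<dots> = (\<Sum>k\<in>{0..<2*n}. if k = pt i then sg i * w $ pt i else 0)"
    using i by (intro sum.cong) (auto simp: omega_entry)
  also have "\<dots> = sg i * w $ pt i" using pt_lt[OF i] by simp
  finally show ?thesis .
qed

lemma pt_reindex:
  "(\<Sum>i\<in>{0..<2*n}. f (pt i)) = (\<Sum>i\<in>{0..<2*n}. (f i :: real))"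
  by (rule sum.reindex_bij_witness[of _ pt pt]) (auto simp: pt_pt pt_lt)

lemma omega_antisym:
  assumes u: "u \<in> carrier_vec (2*n)" and w: "w \<in> carrier_vec (2*n)"
  shows "u \<bullet> (symp_form n *\<^sub>v w) = - ((symp_form n *\<^sub>v u) \<bullet> w)"
proof -
  have "u \<bullet> (symp_form n *\<^sub>v w) = (\<Sum>i\<in>{0..<2*n}. u $ i * (sg i * w $ pt i))"
    unfolding scalar_prod_def using u w omega_carrier[of n] by (intro sum.cong) (auto simp del: index_mult_mat_vec simp add: omega_mult)
  moreover have "(symp_form n *\<^sub>v u) \<bullet> w = (\<Sum>i\<in>{0..<2*n}. (sg i * u $ pt i) * w $ i)"
    unfolding scalar_prod_def using u w omega_carrier[of n] by (intro sum.cong) (auto simp del: index_mult_mat_vec simp add: omega_mult)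
  moreover have "(\<Sum>i\<in>{0..<2*n}. (sg i * u $ pt i) * w $ i) = (\<Sum>i\<in>{0..<2*n}. (sg (pt i) * u $ pt (pt i)) * w $ pt i)"
    using pt_reindex[where n=n and f="\<lambda>i. (sg i * u $ pt i) * w $ i"] by simp
  moreover have "\<dots> = - (\<Sum>i\<in>{0..<2*n}. u $ i * (sg i * w $ pt i))"
    by (simp add: pt_pt sg_pt sum_negf[symmetric] algebra_simps)
  ultimately show ?thesis by simp
qed

lemma omega_norm:
  assumes u: "u \<in> carrier_vec (2*n)"
  shows "(symp_form n *\<^sub>v u) \<bullet> (symp_form n *\<^sub>v u) = u \<bullet> u"
proof -
  have "(symp_form n *\<^sub>v u) \<bullet> (symp_form n *\<^sub>v u) = (\<Sum>i\<in>{0..<2*n}. (sg i * u $ pt i) * (sg i * u $ pt i))"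
    unfolding scalar_prod_def using u omega_carrier[of n] by (intro sum.cong) (auto simp del: index_mult_mat_vec simp add: omega_mult)
  also have "\<dots> = (\<Sum>i\<in>{0..<2*n}. u $ pt i * u $ pt i)"
    by (intro sum.cong) (auto simp: sg_def)
  also have "\<dots> = (\<Sum>i\<in>{0..<2*n}. u $ i * u $ i)" by (rule pt_reindex)
  also have "\<dots> = u \<bullet> u" using u by (simp add: scalar_prod_def)
  finally show ?thesis .
qed

lemma final_ineq:
  fixes a0 b0 yy s1 s2 :: real
  assumes "a0 \<ge> 0" "b0 \<ge> 0" "yy > 0" "a0 \<le> s1 * yy" "b0 \<le> s2 * yy"
    and q: "\<And>t. a0 + t^2 * b0 - 2 * t * yy \<ge> 0"
  shows "s1 * s2 \<ge> 1"
proof -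
  have b0: "b0 > 0"
  proof (rule ccontr)
    assume "\<not> b0 > 0"
    hence "b0 = 0" using assms by simp
    from q[of "(a0 + 1) / (2 * yy)"] this assms(3) show False by (simp add: field_simps)
  qed
  from q[of "yy / b0"] have "a0 + (yy/b0)^2 * b0 - 2 * (yy / b0) * yy \<ge> 0" .
  hence "a0 * b0 \<ge> yy^2" using b0 by (simp add: field_simps power2_eq_square)
  moreover have "(s1 * yy) * (s2 * yy) \<ge> a0 * b0"
    using assms b0 by (intro mult_mono) auto
  ultimately have "(s1 * s2) * yy^2 \<ge> 1 * yy^2" by (simp add: power2_eq_square algebra_simps)
  then show ?thesis using assms(3) by (simp add: mult_le_cancel_right)
qed

lemma conj_form:
  fixes P M :: "real mat"
  assumes P: "P \<in> carrier_mat m m" and M: "M \<in> carrier_mat m m"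
    and a: "a \<in> carrier_vec m" and b: "b \<in> carrier_vec m"
  shows "(P *\<^sub>v a) \<bullet> (M *\<^sub>v (P *\<^sub>v b)) = a \<bullet> ((transpose_mat P * M * P) *\<^sub>v b)"
proof -
  have tP: "transpose_mat P \<in> carrier_mat m m" using P by simp
  have w: "M *\<^sub>v (P *\<^sub>v b) \<in> carrier_vec m" using M P b by simp
  have "(transpose_mat P * M * P) *\<^sub>v b = (transpose_mat P * M) *\<^sub>v (P *\<^sub>v b)"
    by (rule assoc_mult_mat_vec[OF _ P b, of _ m], insert tP M, simp)
  also have "\<dots> = transpose_mat P *\<^sub>v (M *\<^sub>v (P *\<^sub>v b))"
    by (rule assoc_mult_mat_vec[OF tP M], insert P b, simp)
  finally have "(transpose_mat P * M * P) *\<^sub>v b = transpose_mat P *\<^sub>v (M *\<^sub>v (P *\<^sub>v b))" .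
  hence "a \<bullet> ((transpose_mat P * M * P) *\<^sub>v b) = (transpose_mat P *\<^sub>v (M *\<^sub>v (P *\<^sub>v b))) \<bullet> a"
    using tP w a by (simp add: comm_scalar_prod[of _ m])
  also have "\<dots> = (M *\<^sub>v (P *\<^sub>v b)) \<bullet> (P *\<^sub>v a)" by (rule transpose_vec_mult_scalar[OF P a w])
  also have "\<dots> = (P *\<^sub>v a) \<bullet> (M *\<^sub>v (P *\<^sub>v b))" using w P a by (simp add: comm_scalar_prod[of _ m])
  finally show ?thesis by simp
qed

lemma orth_norm:
  fixes Q :: "real mat"
  assumes Q: "Q \<in> carrier_mat m m" and QtQ: "transpose_mat Q * Q = 1\<^sub>m m" and u: "u \<in> carrier_vec m"
  shows "(Q *\<^sub>v u) \<bullet> (Q *\<^sub>v u) = u \<bullet> u"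
proof -
  have "(Q *\<^sub>v u) \<bullet> (Q *\<^sub>v u) = (Q *\<^sub>v u) \<bullet> (1\<^sub>m m *\<^sub>v (Q *\<^sub>v u))" using Q u by simp
  also have "\<dots> = u \<bullet> ((transpose_mat Q * 1\<^sub>m m * Q) *\<^sub>v u)" by (rule conj_form[OF Q _ u u]) simp
  also have "transpose_mat Q * 1\<^sub>m m * Q = 1\<^sub>m m" using Q QtQ by simp
  finally show ?thesis using u by simp
qed

lemma diag_form:
  fixes D :: "real mat"
  assumes D: "D \<in> carrier_mat m m" and dg: "diagonal_mat D" and a: "a \<in> carrier_vec m"
  shows "a \<bullet> (D *\<^sub>v a) = (\<Sum>i\<in>{0..<m}. D $$ (i,i) * (a $ i * a $ i))"
proof -
  have Da: "(D *\<^sub>v a) $ i = D $$ (i,i) * a $ i" if i: "i < m" for i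
  proof -
    have "(D *\<^sub>v a) $ i = (\<Sum>k\<in>{0..<m}. D $$ (i,k) * a $ k)" using D a i by (simp add: scalar_prod_def)
    also have "\<dots> = (\<Sum>k\<in>{0..<m}. if k = i then D $$ (i,i) * a $ i else 0)"
      using dg D i unfolding diagonal_mat_def by (intro sum.cong) auto
    finally show ?thesis using i by simp
  qed
  show ?thesis unfolding scalar_prod_def using D a
    by (intro sum.cong) (auto simp del: index_mult_mat_vec simp: Da)
qed

lemma select_idx:
  fixes dl :: "real list"
  assumes len: "length dl = m" and j0m: "j0 < m" "j0 \<le> m - Suc j0"
  shows "\<exists>Sx Tx. Sx \<subseteq> {0..<m} \<and> Tx \<subseteq> {0..<m} \<and> card Sx = Suc j0 \<and> card Tx = j0 \<and>
     (\<forall>i\<in>Sx. dl ! i \<le> sort dl ! j0) \<and> (\<forall>i<m. i \<notin> Tx \<longrightarrow> dl ! i \<le> sort dl ! (m - Suc j0))"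
proof -
  define s where "s = sort dl"
  have len_s: "length s = m" unfolding s_def using len by simp
  have sorted_s: "sorted s" unfolding s_def by simp
  have "mset s = mset dl" unfolding s_def by simp
  then obtain p where p: "p permutes {..<length dl}" "permute_list p dl = s"
    by (rule mset_eq_permutation)
  have pm: "p permutes {..<m}" using p(1) len by simp
  have s_nth: "s ! k = dl ! (p k)" if "k < m" for k
    using p that len permute_list_nth[of p dl k] by auto
  have p_lt: "p k < m" if "k < m" for k using permutes_in_image[OF pm, of k] that by simp
  have inj_p: "inj p" using pm by (rule permutes_inj)
  define Sx where "Sx = p ` {0..j0}"
  define Tx where "Tx = p ` {m - j0..<m}"
  have cS: "card Sx = Suc j0" unfolding Sx_def using card_image[OF inj_on_subset[OF inj_p]] by simp
  have cT: "card Tx = j0" unfolding Tx_def using card_image[OF inj_on_subset[OF inj_p]] j0m by simp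
  have Ssub: "Sx \<subseteq> {0..<m}" unfolding Sx_def using p_lt j0m by auto
  have Tsub: "Tx \<subseteq> {0..<m}" unfolding Tx_def using p_lt by auto
  have dS: "dl ! i \<le> s ! j0" if "i \<in> Sx" for i
  proof -
    from that obtain k where k: "k \<le> j0" "i = p k" unfolding Sx_def by auto
    then have "dl ! i = s ! k" using s_nth j0m by simp
    also have "\<dots> \<le> s ! j0" using sorted_nth_mono[OF sorted_s k(1)] j0m len_s by simp
    finally show ?thesis .
  qed
  have dT: "dl ! i \<le> s ! (m - Suc j0)" if "i < m" "i \<notin> Tx" for i
  proof -
    have "i \<in> p ` {..<m}" using that permutes_image[OF pm] by simp
    then obtain k where k: "k < m" "i = p k" by auto
    with that(2) have "k < m - j0" unfolding Tx_def by auto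
    then have kk: "k \<le> m - Suc j0" by simp
    have "dl ! i = s ! k" using s_nth k by simp
    also have "\<dots> \<le> s ! (m - Suc j0)" using sorted_nth_mono[OF sorted_s kk] len_s j0m
      by simp
    finally show ?thesis .
  qed
  show ?thesis unfolding s_def[symmetric] using Ssub Tsub cS cT dS dT by blast
qed

lemma exists_vec:
  fixes A :: "real mat"
  assumes A: "A \<in> carrier_mat m m" and Ssub: "Sx \<subseteq> {0..<m}" and Tsub: "Tx \<subseteq> {0..<m}"
    and card: "card Tx < card Sx"
  shows "\<exists>y \<in> carrier_vec m. y \<noteq> 0\<^sub>v m \<and> (\<forall>i<m. i \<notin> Sx \<longrightarrow> y $ i = 0) \<and>
     (\<forall>r\<in>Tx. (A *\<^sub>v y) $ r = 0)"
proof -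
  have finS: "finite Sx" using Ssub finite_subset by blast
  have finT: "finite Tx" using Tsub finite_subset by blast
  obtain c where c: "\<exists>i\<in>Sx. c i \<noteq> 0" "\<forall>r\<in>Tx. (\<Sum>i\<in>Sx. A $$ (r,i) * c i) = 0"
    using hom_system[OF finT finS card, of "\<lambda>r i. A $$ (r,i)"] by auto
  define y where "y = vec m (\<lambda>i. if i \<in> Sx then c i else 0)"
  have y: "y \<in> carrier_vec m" unfolding y_def by simp
  have y0: "y \<noteq> 0\<^sub>v m"
  proof
    assume "y = 0\<^sub>v m"
    from c(1) obtain i where i: "i \<in> Sx" "c i \<noteq> 0" by auto
    moreover have "i < m" using Ssub i by auto
    ultimately have "y $ i \<noteq> 0" unfolding y_def by simp
    with \<open>y = 0\<^sub>v m\<close> \<open>i < m\<close> show False by simp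
  qed
  have yS: "\<forall>i<m. i \<notin> Sx \<longrightarrow> y $ i = 0" unfolding y_def by simp
  have zT: "(A *\<^sub>v y) $ r = 0" if "r \<in> Tx" for r
  proof -
    have rm: "r < m" using that Tsub by auto
    have "(A *\<^sub>v y) $ r = (\<Sum>i\<in>{0..<m}. A $$ (r,i) * y $ i)" using A y rm
      by (simp add: scalar_prod_def)
    also have "\<dots> = (\<Sum>i\<in>{0..<m}. if i \<in> Sx then A $$ (r,i) * c i else 0)"
      unfolding y_def by (intro sum.cong) auto
    also have "\<dots> = (\<Sum>i\<in>{0..<m} \<inter> Sx. A $$ (r,i) * c i)" by (simp add: sum.inter_restrict)
    also have "{0..<m} \<inter> Sx = Sx" using Ssub by auto
    finally show ?thesis using c(2) that by simp
  qed
  show ?thesis using y y0 yS zT by blast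
qed

lemma diag_bound:
  fixes D :: "real mat"
  assumes D: "D \<in> carrier_mat m m" and dg: "diagonal_mat D" and y: "y \<in> carrier_vec m"
    and b: "\<And>i. i < m \<Longrightarrow> y $ i \<noteq> 0 \<Longrightarrow> D $$ (i,i) \<le> c"
  shows "y \<bullet> (D *\<^sub>v y) \<le> c * (y \<bullet> y)"
proof -
  have "y \<bullet> (D *\<^sub>v y) = (\<Sum>i\<in>{0..<m}. D $$ (i,i) * (y $ i * y $ i))"
    using diag_form[OF D dg y] .
  also have "\<dots> \<le> (\<Sum>i\<in>{0..<m}. c * (y $ i * y $ i))"
  proof (rule sum_mono)
    fix i assume i: "i \<in> {0..<m}"
    show "D $$ (i,i) * (y $ i * y $ i) \<le> c * (y $ i * y $ i)"
    proof (cases "y $ i = 0")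
      case False
      then show ?thesis using b[OF _ False] i by (intro mult_right_mono) auto
    qed simp
  qed
  also have "\<dots> = c * (y \<bullet> y)" using y by (simp add: scalar_prod_def sum_distrib_left)
  finally show ?thesis .
qed

lemma core:
  fixes D A :: "real mat"
  assumes D: "D \<in> carrier_mat m m" and dgD: "diagonal_mat D" and A: "A \<in> carrier_mat m m"
    and F: "\<And>a b. a \<in> carrier_vec m \<Longrightarrow> b \<in> carrier_vec m \<Longrightarrow>
         a \<bullet> (D *\<^sub>v a) + b \<bullet> (D *\<^sub>v b) - a \<bullet> (A *\<^sub>v b) + b \<bullet> (A *\<^sub>v a) \<ge> 0"
    and anti: "\<And>a b. a \<in> carrier_vec m \<Longrightarrow> b \<in> carrier_vec m \<Longrightarrow> a \<bullet> (A *\<^sub>v b) = - ((A *\<^sub>v a) \<bullet> b)"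
    and nrm: "\<And>a. a \<in> carrier_vec m \<Longrightarrow> (A *\<^sub>v a) \<bullet> (A *\<^sub>v a) = a \<bullet> a"
    and j0m: "j0 < m" "j0 \<le> m - Suc j0"
  shows "sort (diag_mat D) ! j0 * sort (diag_mat D) ! (m - Suc j0) \<ge> 1"
proof -
  define dl where "dl = diag_mat D"
  define s where "s = sort dl"
  have len_dl: "length dl = m" unfolding dl_def diag_mat_def using D by simp
  have dl_nth: "dl ! i = D $$ (i,i)" if "i < m" for i
    unfolding dl_def diag_mat_def using D that by simp
  obtain Sx Tx where ST: "Sx \<subseteq> {0..<m}" "Tx \<subseteq> {0..<m}" "card Sx = Suc j0" "card Tx = j0"
     "\<forall>i\<in>Sx. dl ! i \<le> s ! j0" "\<forall>i<m. i \<notin> Tx \<longrightarrow> dl ! i \<le> s ! (m - Suc j0)"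
    using select_idx[OF len_dl j0m] unfolding s_def by blast
  obtain y where y: "y \<in> carrier_vec m" "y \<noteq> 0\<^sub>v m" "\<forall>i<m. i \<notin> Sx \<longrightarrow> y $ i = 0"
     "\<forall>r\<in>Tx. (A *\<^sub>v y) $ r = 0"
    using exists_vec[OF A ST(1) ST(2)] ST(3,4) by auto
  define z where "z = A *\<^sub>v y"
  have z: "z \<in> carrier_vec m" unfolding z_def using A y by simp
  define a0 where "a0 = y \<bullet> (D *\<^sub>v y)"
  define b0 where "b0 = z \<bullet> (D *\<^sub>v z)"
  define yy where "yy = y \<bullet> y"
  have yy: "yy > 0" unfolding yy_def using self_sprod_pos[OF y(1) y(2)] .
  have zA: "M *\<^sub>v 0\<^sub>v m = 0\<^sub>v m" if "M \<in> carrier_mat m m" for M :: "real mat"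
    by (rule eq_vecI, insert that, auto intro!: scalar_prod_right_zero[of _ m])
  have a0: "a0 \<ge> 0" using F[OF y(1) zero_carrier_vec[of m]] y zA[OF A] zA[OF D] A D unfolding a0_def by simp
  have b0: "b0 \<ge> 0" using F[OF zero_carrier_vec[of m] z] z zA[OF A] zA[OF D] A D unfolding b0_def by simp
  have zz: "z \<bullet> z = yy" unfolding z_def yy_def by (rule nrm[OF y(1)])
  have yAz: "y \<bullet> (A *\<^sub>v z) = - (z \<bullet> z)" unfolding z_def[symmetric] using anti[OF y(1) z] unfolding z_def by simp
  have q: "a0 + t^2 * b0 - 2 * t * yy \<ge> 0" for t :: real
  proof -
    have "0 \<le> y \<bullet> (D *\<^sub>v y) + ((-t) \<cdot>\<^sub>v z) \<bullet> (D *\<^sub>v ((-t) \<cdot>\<^sub>v z)) - y \<bullet> (A *\<^sub>v ((-t) \<cdot>\<^sub>v z))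
        + ((-t) \<cdot>\<^sub>v z) \<bullet> (A *\<^sub>v y)"
      using F[OF y(1), of "(-t) \<cdot>\<^sub>v z"] z by simp
    also have "\<dots> = a0 + t^2 * b0 + t * (y \<bullet> (A *\<^sub>v z)) - t * (z \<bullet> z)"
      unfolding a0_def b0_def using y z A D
      by (simp add: mult_mat_vec[of _ m m] z_def[symmetric] power2_eq_square algebra_simps)
    finally show ?thesis unfolding yAz zz by simp
  qed
  have a0le: "a0 \<le> s ! j0 * yy" unfolding a0_def yy_def
  proof (rule diag_bound[OF D dgD y(1)])
    fix i assume "i < m" "y $ i \<noteq> 0"
    then have "i \<in> Sx" using y(3) by auto
    then show "D $$ (i,i) \<le> s ! j0" using ST(5) dl_nth \<open>i < m\<close> by auto
  qed
  have b0le: "b0 \<le> s ! (m - Suc j0) * yy" unfolding b0_def zz[symmetric]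
  proof (rule diag_bound[OF D dgD z])
    fix i assume "i < m" "z $ i \<noteq> 0"
    then have "i \<notin> Tx" using y(4) unfolding z_def by auto
    then show "D $$ (i,i) \<le> s ! (m - Suc j0)" using ST(6) dl_nth \<open>i < m\<close> by auto
  qed
  have "s ! j0 * s ! (m - Suc j0) \<ge> 1" by (rule final_ineq[OF a0 b0 yy a0le b0le q])
  then show ?thesis unfolding s_def dl_def by simp
qed

lemma lemma2_j:
  fixes n :: nat and \<sigma> :: "real mat"
  assumes "n \<ge> 1"
    and "\<sigma> \<in> carrier_mat (2*n) (2*n)"
    and "transpose_mat \<sigma> = \<sigma>"
    and "psd_cmat (sigma_plus_iOmega n \<sigma>)"
    and j: "j \<in> {1..n}"
  shows "eig_up \<sigma> ! (j - 1) * eig_down \<sigma> ! (j - 1) \<ge> 1"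
proof -
  define m where "m = 2 * n"
  have S: "\<sigma> \<in> carrier_mat m m" using assms(2) unfolding m_def .
  define Om where "Om = symp_form n"
  have Om: "Om \<in> carrier_mat m m" unfolding Om_def m_def by (rule omega_carrier)
  obtain P where P: "P \<in> carrier_mat m m" "transpose_mat P * P = 1\<^sub>m m"
      "diagonal_mat (transpose_mat P * \<sigma> * P)"
    using spectral[OF S assms(3)] by blast
  have tP: "transpose_mat P \<in> carrier_mat m m" using P by simp
  have PPt: "P * transpose_mat P = 1\<^sub>m m" using mat_mult_left_right_inverse[OF tP P(1) P(2)] .
  have tPtP: "transpose_mat (transpose_mat P) * transpose_mat P = 1\<^sub>m m" using PPt by simp
  define D where "D = transpose_mat P * \<sigma> * P"
  have D: "D \<in> carrier_mat m m" unfolding D_def using P S by simp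
  have dgD: "diagonal_mat D" using P(3) unfolding D_def .
  have eu: "eig_up \<sigma> = sort (diag_mat D)" unfolding D_def by (rule eig_up_diag[OF S P])
  have len_s: "length (sort (diag_mat D)) = m" using D by (simp add: diag_mat_def)
  define j0 where "j0 = j - 1"
  have j0: "j0 < n" "j - 1 = j0" using j unfolding j0_def by auto
  have j0m: "j0 < m" "j0 \<le> m - Suc j0" using j0 unfolding m_def by auto
  have ed: "eig_down \<sigma> ! j0 = sort (diag_mat D) ! (m - Suc j0)"
    unfolding eig_down_def eu using j0m len_s by (simp add: rev_nth)
  define A where "A = transpose_mat P * Om * P"
  have A: "A \<in> carrier_mat m m" unfolding A_def using P Om by simp
  have AA: "A *\<^sub>v b = transpose_mat P *\<^sub>v (Om *\<^sub>v (P *\<^sub>v b))" if b: "b \<in> carrier_vec m" for b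
    unfolding A_def
    using assoc_mult_mat_vec[OF _ P(1) b, of "transpose_mat P * Om" m] assoc_mult_mat_vec[OF tP Om, of "P *\<^sub>v b"]
      tP Om P b by simp
  have F: "a \<bullet> (D *\<^sub>v a) + b \<bullet> (D *\<^sub>v b) - a \<bullet> (A *\<^sub>v b) + b \<bullet> (A *\<^sub>v a) \<ge> 0"
    if a: "a \<in> carrier_vec m" and b: "b \<in> carrier_vec m" for a b
  proof -
    have "(P *\<^sub>v a) \<bullet> (\<sigma> *\<^sub>v (P *\<^sub>v a)) + (P *\<^sub>v b) \<bullet> (\<sigma> *\<^sub>v (P *\<^sub>v b))
        - (P *\<^sub>v a) \<bullet> (Om *\<^sub>v (P *\<^sub>v b)) + (P *\<^sub>v b) \<bullet> (Om *\<^sub>v (P *\<^sub>v a)) \<ge> 0"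
      unfolding Om_def by (rule psd_real_form[OF assms(2) assms(4)], insert P a b, auto simp: m_def)
    then show ?thesis unfolding D_def A_def
      using conj_form[OF P(1) S] conj_form[OF P(1) Om] a b by simp
  qed
  have anti: "a \<bullet> (A *\<^sub>v b) = - ((A *\<^sub>v a) \<bullet> b)"
    if a: "a \<in> carrier_vec m" and b: "b \<in> carrier_vec m" for a b
  proof -
    have "a \<bullet> (A *\<^sub>v b) = (P *\<^sub>v a) \<bullet> (Om *\<^sub>v (P *\<^sub>v b))" unfolding A_def
      using conj_form[OF P(1) Om a b] by simp
    also have "\<dots> = - ((Om *\<^sub>v (P *\<^sub>v a)) \<bullet> (P *\<^sub>v b))" unfolding Om_def
      by (rule omega_antisym, insert P a b, auto simp: m_def)
    also have "(Om *\<^sub>v (P *\<^sub>v a)) \<bullet> (P *\<^sub>v b) = (transpose_mat P *\<^sub>v (Om *\<^sub>v (P *\<^sub>v a))) \<bullet> b"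
      using transpose_vec_mult_scalar[OF P(1) b, of "Om *\<^sub>v (P *\<^sub>v a)"] Om P a by simp
    also have "transpose_mat P *\<^sub>v (Om *\<^sub>v (P *\<^sub>v a)) = A *\<^sub>v a" using AA[OF a] by simp
    finally show ?thesis .
  qed
  have nrm: "(A *\<^sub>v a) \<bullet> (A *\<^sub>v a) = a \<bullet> a" if a: "a \<in> carrier_vec m" for a
  proof -
    have "(A *\<^sub>v a) \<bullet> (A *\<^sub>v a) = (Om *\<^sub>v (P *\<^sub>v a)) \<bullet> (Om *\<^sub>v (P *\<^sub>v a))"
      unfolding AA[OF a] using orth_norm[OF tP tPtP, of "Om *\<^sub>v (P *\<^sub>v a)"] Om P a by simp
    also have "\<dots> = (P *\<^sub>v a) \<bullet> (P *\<^sub>v a)" unfolding Om_def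
      by (rule omega_norm, insert P a, simp add: m_def)
    also have "\<dots> = a \<bullet> a" using orth_norm[OF P(1) P(2) a] .
    finally show ?thesis .
  qed
  have "sort (diag_mat D) ! j0 * sort (diag_mat D) ! (m - Suc j0) \<ge> 1"
    by (rule core[OF D dgD A F anti nrm j0m])
  then show ?thesis using j0(2) ed eu by simp
qed

theorem lemma2:
  fixes n :: nat and \<sigma> :: "real mat"
  assumes "n \<ge> 1"
    and "\<sigma> \<in> carrier_mat (2*n) (2*n)"
    and "transpose_mat \<sigma> = \<sigma>"
    and "psd_cmat (sigma_plus_iOmega n \<sigma>)"
  shows "\<forall>j \<in> {1..n}. eig_up \<sigma> ! (j - 1) * eig_down \<sigma> ! (j - 1) \<ge> 1"
  using lemma2_j[OF assms] by blast

end
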